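(* Let $n>k+\ell$, and let $\mathcal F\subset\binom{[n]}{k}$, $\mathcal G\subset\binom{[n]}{\ell}$ be non-trivial cross-intersecting families forming a saturated pair, shifted ad extremis with respect to $\tau(\mathcal F)\ge2$, and not both initial. If the 2-cover graph $\hat{\mathcal H}$ of $\mathcal F$ is triangle-free, then there are disjoint sets $X,Y\subset[n]$ with $X\cup Y=[|X|+|Y|]$, $2\le|X|\le k$, $2\le|Y|\le k$, such that the edge set of $\hat{\mathcal H}$ is exactly $\{\{x,y\}:x\in X,y\in Y\}$.
   Context: Non-trivial: nonempty and not a star (a star is a family whose members share a common element). Cross-intersecting: $F\cap G\ne\emptyset$ for all $F\in\mathcal F,G\in\mathcal G$; saturated pair: adding any further $k$-set to $\mathcal F$ or $\ell$-set to $\mathcal G$ destroys cross-intersection. Shifting: for $i<j$, $S_{ij}(F)=(F\setminus\{j\})\cup\{i\}$ if $j\in F$, $i\notin F$, $(F\setminus\{j\})\cup\{i\}\notin\mathcal F$, else $S_{ij}(F)=F$; $S_{ij}(\mathcal F)=\{S_{ij}(F):F\in\mathcal F\}$. Shifted ad extremis with respect to $\tau(\mathcal F)\ge2$: for every $1\le i<j\le n$, either $S_{ij}(\mathcal F)=\mathcal F$ and $S_{ij}(\mathcal G)=\mathcal G$, or $S_{ij}(\mathcal F)$ is a star. Initial: with $(a_1,\dots,a_k)\prec(b_1,\dots,b_k)$ iff $a_i\le b_i$ for all $i$, a family is initial if $A\prec B\in\mathcal F$ implies $A\in\mathcal F$. The 2-cover graph $\hat{\mathcal H}$ has vertex set $[n]$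 and edges $\{i,j\}$ such that every $F\in\mathcal F$ meets $\{i,j\}$. *)

theory Defs
  imports Main
begin

definition k_sets :: "nat \<Rightarrow> nat \<Rightarrow> nat set set" where
  "k_sets n k = {A. A \<subseteq> {1..n} \<and> card A = k}"

definition is_star :: "nat set set \<Rightarrow> bool" where
  "is_star F \<longleftrightarrow> (\<exists>x. \<forall>A\<in>F. x \<in> A)"

definition nontrivial :: "nat set set \<Rightarrow> bool" where
  "nontrivial F \<longleftrightarrow> F \<noteq> {} \<and> \<not> is_star F"

definition cross_intersecting :: "nat set set \<Rightarrow> nat set set \<Rightarrow> bool" where
  "cross_intersecting F G \<longleftrightarrow> (\<forall>A\<in>F. \<forall>B\<in>G. A \<inter> B \<noteq> {})"

definition saturated_pair :: "nat \<Rightarrow> nat \<Rightarrow> nat \<Rightarrow> nat set set \<Rightarrow> nat set set \<Rightarrow> bool" where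
  "saturated_pair n k l F G \<longleftrightarrow>
     (\<forall>A \<in> k_sets n k - F. \<not> cross_intersecting (insert A F) G) \<and>
     (\<forall>B \<in> k_sets n l - G. \<not> cross_intersecting F (insert B G))"

definition shift_set :: "nat \<Rightarrow> nat \<Rightarrow> nat set set \<Rightarrow> nat set \<Rightarrow> nat set" where
  "shift_set i j F A =
     (if j \<in> A \<and> i \<notin> A \<and> (A - {j}) \<union> {i} \<notin> F then (A - {j}) \<union> {i} else A)"

definition shift :: "nat \<Rightarrow> nat \<Rightarrow> nat set set \<Rightarrow> nat set set" where
  "shift i j F = shift_set i j F ` F"

definition shifted_ad_extremis :: "nat \<Rightarrow> nat set set \<Rightarrow> nat set set \<Rightarrow> bool" where
  "shifted_ad_extremis n F G \<longleftrightarrow>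
     (\<forall>i j. 1 \<le> i \<and> i < j \<and> j \<le> n \<longrightarrow>
        (shift i j F = F \<and> shift i j G = G) \<or> is_star (shift i j F))"

text \<open>Shifting partial order: compare the increasingly sorted element lists coordinatewise.\<close>
definition shift_le :: "nat set \<Rightarrow> nat set \<Rightarrow> bool" where
  "shift_le A B \<longleftrightarrow> card A = card B \<and>
     (\<forall>t < card A. sorted_list_of_set A ! t \<le> sorted_list_of_set B ! t)"

definition initial :: "nat \<Rightarrow> nat set set \<Rightarrow> bool" where
  "initial n F \<longleftrightarrow> (\<forall>A B. A \<subseteq> {1..n} \<and> B \<in> F \<and> shift_le A B \<longrightarrow> A \<in> F)"

definition cover_edges :: "nat \<Rightarrow> nat set set \<Rightarrow> nat set set" where
  "cover_edges n F = {{i, j} | i j. i \<in> {1..n} \<and> j \<in> {1..n} \<and> i \<noteq> j \<and>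
                                    (\<forall>A\<in>F. A \<inter> {i, j} \<noteq> {})}"

definition triangle_free :: "nat set set \<Rightarrow> bool" where
  "triangle_free E \<longleftrightarrow> \<not> (\<exists>a b c. a \<noteq> b \<and> b \<noteq> c \<and> a \<noteq> c \<and>
        {a, b} \<in> E \<and> {b, c} \<in> E \<and> {a, c} \<in> E)"

end

theory Submission imports Defs begin

definition adjF :: "nat \<Rightarrow> nat set set \<Rightarrow> nat \<Rightarrow> nat \<Rightarrow> bool" where
  "adjF n F i j \<longleftrightarrow> i \<in> {1..n} \<and> j \<in> {1..n} \<and> i \<noteq> j \<and> (\<forall>A\<in>F. A \<inter> {i, j} \<noteq> {})"

lemma adjF_sym: "adjF n F i j \<Longrightarrow> adjF n F j i"
  unfolding adjF_def by (auto simp: insert_commute)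

lemma ce_iff: "{i, j} \<in> cover_edges n F \<longleftrightarrow> adjF n F i j"
proof
  assume "{i, j} \<in> cover_edges n F"
  then obtain a b where e: "{i,j} = {a,b}" and "adjF n F a b"
    unfolding cover_edges_def adjF_def by blast
  then have "(i = a \<and> j = b) \<or> (i = b \<and> j = a)" unfolding doubleton_eq_iff by blast
  then show "adjF n F i j" using adjF_sym \<open>adjF n F a b\<close> by blast
next
  assume "adjF n F i j" then show "{i, j} \<in> cover_edges n F"
    unfolding cover_edges_def adjF_def by blast
qed

lemma ce_elim: "e \<in> cover_edges n F \<Longrightarrow> \<exists>i j. e = {i,j} \<and> adjF n F i j"
  unfolding cover_edges_def adjF_def by blast

lemma stable: "shift i j H = H \<Longrightarrow> A \<in> H \<Longrightarrow> j \<in> A \<Longrightarrow> i \<notin> A \<Longrightarrow> A - {j} \<union> {i} \<in> H"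
proof (rule ccontr)
  assume h: "shift i j H = H" "A \<in> H" "j \<in> A" "i \<notin> A" "A - {j} \<union> {i} \<notin> H"
  then have "shift_set i j H A = A - {j} \<union> {i}" unfolding shift_set_def by simp
  moreover have "shift_set i j H A \<in> shift i j H" using h(2) unfolding shift_def by blast
  ultimately show False using h by simp
qed

lemma star_shift:
  assumes "\<not> is_star F" "is_star (shift i j F)"
  shows "(\<forall>A\<in>F. A \<inter> {i,j} \<noteq> {}) \<and> (\<forall>A\<in>F. j \<in> A \<longrightarrow> i \<notin> A \<longrightarrow> A - {j} \<union> {i} \<notin> F)"
proof -
  obtain c where c: "\<forall>A\<in>shift i j F. c \<in> A" using assms(2) unfolding is_star_def by blast
  have cA: "c \<in> shift_set i j F A" if "A \<in> F" for A using c that unfolding shift_def by blast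
  have "c = i"
  proof (rule ccontr)
    assume "c \<noteq> i"
    have "c \<in> A" if "A \<in> F" for A
    proof -
      have "c \<in> shift_set i j F A" using cA that .
      then show ?thesis using \<open>c \<noteq> i\<close> unfolding shift_set_def by (auto split: if_splits)
    qed
    then have "\<forall>A\<in>F. c \<in> A" by blast
    then show False using assms(1) unfolding is_star_def by blast
  qed
  have m: "i \<in> shift_set i j F A" if "A\<in>F" for A using cA that \<open>c=i\<close> by simp
  have o: "i \<in> A \<or> (j \<in> A \<and> A - {j} \<union> {i} \<notin> F)" if "A\<in>F" for A
  proof (cases "j \<in> A \<and> i \<notin> A \<and> A - {j} \<union> {i} \<notin> F")
    case True then show ?thesis by blast
  next
    case False then have "shift_set i j F A = A" unfolding shift_set_def by auto
    then show ?thesis using m[OF that] by simp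
  qed
  show ?thesis using o by blast
qed

lemma low_exists:
  fixes H :: "nat set set" and D :: "nat set"
  assumes cl: "\<And>A c a. A\<in>H \<Longrightarrow> c\<in>D \<Longrightarrow> a\<in>D \<Longrightarrow> c<a \<Longrightarrow> a\<in>A \<Longrightarrow> c\<notin>A \<Longrightarrow> A-{a}\<union>{c} \<in> H"
  shows "A\<in>H \<Longrightarrow> finite A \<Longrightarrow> \<exists>A'\<in>H. finite A' \<and> A'-D = A-D \<and> card(A'\<inter>D) = card(A\<inter>D) \<and> (\<forall>c\<in>D. \<forall>a\<in>A'\<inter>D. c<a \<longrightarrow> c\<in>A')"
proof (induction "\<Sum>(A\<inter>D)" arbitrary: A rule: less_induct)
  case less
  show ?case
  proof (cases "\<forall>c\<in>D. \<forall>a\<in>A\<inter>D. c<a \<longrightarrow> c\<in>A")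
    case True then show ?thesis using less.prems by blast
  next
    case False
    then obtain c a where ca: "c\<in>D" "a\<in>A" "a\<in>D" "c<a" "c\<notin>A" by blast
    define A1 where "A1 = A-{a}\<union>{c}"
    have A1H: "A1 \<in> H" unfolding A1_def using cl less.prems ca by blast
    have fin: "finite (A\<inter>D)" using less.prems by simp
    have eq: "A1\<inter>D = insert c ((A\<inter>D) - {a})" unfolding A1_def using ca by auto
    have cn: "c \<notin> (A\<inter>D) - {a}" using ca by auto
    have s1: "\<Sum>(A\<inter>D) = a + \<Sum>((A\<inter>D) - {a})" using fin ca by (simp add: sum.remove)
    have s2: "\<Sum>(A1\<inter>D) = c + \<Sum>((A\<inter>D) - {a})" unfolding eq using fin cn by simp
    have lt: "\<Sum>(A1\<inter>D) < \<Sum>(A\<inter>D)" using s1 s2 ca by simp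
    have cd: "card (A\<inter>D - {a}) = card (A\<inter>D) - 1" using fin ca by simp
    have cp: "card (A\<inter>D) > 0" using fin ca by (auto simp: card_gt_0_iff)
    have c1: "card(A1\<inter>D) = card(A\<inter>D)" unfolding eq using fin cn cd cp by simp
    have d1: "A1 - D = A - D" unfolding A1_def using ca by auto
    have "finite A1" unfolding A1_def using less.prems by simp
    from less.hyps[OF lt A1H this] obtain A' where
      "A'\<in>H" "finite A'" "A' - D = A1 - D" "card (A' \<inter> D) = card (A1 \<inter> D)"
      "\<forall>c\<in>D. \<forall>a\<in>A' \<inter> D. c < a \<longrightarrow> c \<in> A'" by blast
    then show ?thesis using c1 d1 by auto
  qed
qed

lemma downclosed_unique:
  fixes D S1 S2 :: "nat set"
  assumes "S1 \<subseteq> D" "S2 \<subseteq> D" "finite S1" "finite S2"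
    "\<forall>c\<in>D. \<forall>a\<in>S1. c<a \<longrightarrow> c\<in>S1" "\<forall>c\<in>D. \<forall>a\<in>S2. c<a \<longrightarrow> c\<in>S2"
    "card S1 = card S2"
  shows "S1 = S2"
proof -
  have "S1 \<subseteq> S2 \<or> S2 \<subseteq> S1"
  proof (rule ccontr)
    assume "\<not> ?thesis"
    then obtain a b where "a\<in>S1" "a\<notin>S2" "b\<in>S2" "b\<notin>S1" by blast
    note ab = this
    have "a \<in> D" "b \<in> D" using ab assms(1,2) by auto
    show False
    proof (cases a b rule: linorder_cases)
      case less then show ?thesis using assms(6) ab \<open>a \<in> D\<close> by blast
    next
      case equal then show ?thesis using ab by simp
    next
      case greater then show ?thesis using assms(5) ab \<open>b \<in> D\<close> by blast
    qed
  qed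
  then show ?thesis
  proof
    assume "S1 \<subseteq> S2" then show ?thesis using card_subset_eq[OF assms(4)] assms(7) by blast
  next
    assume "S2 \<subseteq> S1" then show ?thesis using card_subset_eq[OF assms(3), of S2] assms(7) by simp
  qed
qed


lemma init_list:
  fixes H :: "nat set set" and as :: "nat list"
  assumes cl: "\<And>B c b. B\<in>H \<Longrightarrow> 1\<le>c \<Longrightarrow> c<b \<Longrightarrow> b\<in>B \<Longrightarrow> c\<notin>B \<Longrightarrow> B-{b}\<union>{c} \<in> H"
    and sa: "sorted_wrt (<) as" and pos: "\<forall>t<length as. 1 \<le> as!t"
  shows "set bs \<in> H \<Longrightarrow> sorted_wrt (<) bs \<Longrightarrow> length as = length bs \<Longrightarrow>
         (\<forall>t<length as. as!t \<le> bs!t) \<Longrightarrow> set as \<in> H"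
proof (induction "card {t. t<length as \<and> as!t \<noteq> bs!t}" arbitrary: bs rule: less_induct)
  case less
  show ?case
  proof (cases "\<exists>t<length as. as!t \<noteq> bs!t")
    case False
    then have "as = bs" by (intro nth_equalityI) (use less.prems in auto)
    then show ?thesis using less.prems by simp
  next
    case True
    define t where "t = (LEAST t. t<length as \<and> as!t \<noteq> bs!t)"
    have t: "t<length as" "as!t \<noteq> bs!t" using LeastI_ex[OF True] unfolding t_def by auto
    have before: "as!s = bs!s" if "s<t" for s
      using not_less_Least[of s "\<lambda>t. t<length as \<and> as!t \<noteq> bs!t"] that t(1) unfolding t_def by auto
    have lt: "as!t < bs!t" using t less.prems(4) by (simp add: le_neq_implies_less)
    have sA: "\<And>i j. i<j \<Longrightarrow> j<length as \<Longrightarrow> as!i < as!j" using sa by (simp add: sorted_wrt_iff_nth_less)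
    have sB: "\<And>i j. i<j \<Longrightarrow> j<length bs \<Longrightarrow> bs!i < bs!j" using less.prems(2) by (simp add: sorted_wrt_iff_nth_less)
    have notin: "as!t \<notin> set bs"
    proof
      assume "as!t \<in> set bs"
      then obtain s where s: "s<length bs" "bs!s = as!t" by (auto simp: in_set_conv_nth)
      show False
      proof (cases s t rule: linorder_cases)
        case less then show ?thesis using before[OF less] sA[OF less t(1)] s(2) by simp
      next
        case equal then show ?thesis using s lt by simp
      next
        case greater then show ?thesis using sB[OF greater s(1)] s(2) lt by simp
      qed
    qed
    define bs' where "bs' = bs[t := as!t]"
    have dist: "distinct bs" using less.prems(2) by (simp add: strict_sorted_iff)
    have setb': "set bs' = set bs - {bs!t} \<union> {as!t}"
      unfolding bs'_def using set_update_distinct[OF dist] t less.prems(3) by auto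
    have bt: "bs!t \<in> set bs" using t less.prems(3) by simp
    have pt: "1 \<le> as!t" using pos t by simp
    have H': "set bs' \<in> H" unfolding setb' using cl[OF less.prems(1) pt lt bt notin] .
    have len': "length as = length bs'" unfolding bs'_def using less.prems(3) by simp
    have sorted': "sorted_wrt (<) bs'"
      unfolding sorted_wrt_iff_nth_less
    proof (intro allI impI)
      fix i j assume ij: "i<j" "j<length bs'"
      have jl: "j < length bs" using ij unfolding bs'_def by simp
      show "bs'!i < bs'!j"
      proof (cases "i = t")
        case True then show ?thesis unfolding bs'_def using ij jl lt sB[of t j] by auto
      next
        case False note it = this
        show ?thesis
        proof (cases "j = t")
          case True
          then have "bs!i = as!i" using before ij by simp
          then show ?thesis unfolding bs'_def using ij jl True it sA less.prems(3) by auto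
        next
          case False then show ?thesis unfolding bs'_def using ij jl it sB by auto
        qed
      qed
    qed
    have le': "\<forall>s<length as. as!s \<le> bs'!s"
    proof (intro allI impI)
      fix s assume "s < length as"
      then show "as!s \<le> bs'!s" unfolding bs'_def by (cases "s = t") (use less.prems(3,4) in auto)
    qed
    have sub: "{s. s<length as \<and> as!s \<noteq> bs'!s} \<subseteq> {s. s<length as \<and> as!s \<noteq> bs!s} - {t}"
    proof
      fix s assume h: "s \<in> {s. s<length as \<and> as!s \<noteq> bs'!s}"
      show "s \<in> {s. s<length as \<and> as!s \<noteq> bs!s} - {t}"
        using h less.prems(3) by (cases "s = t") (auto simp: bs'_def)
    qed
    have "card {s. s<length as \<and> as!s \<noteq> bs'!s} < card {s. s<length as \<and> as!s \<noteq> bs!s}"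
    proof -
      have "card {s. s<length as \<and> as!s \<noteq> bs'!s} \<le> card ({s. s<length as \<and> as!s \<noteq> bs!s} - {t})"
        by (rule card_mono[OF _ sub]) simp
      also have "\<dots> < card {s. s<length as \<and> as!s \<noteq> bs!s}"
        by (rule card_Diff1_less) (use t in auto)
      finally show ?thesis .
    qed
    then show ?thesis using less.hyps H' sorted' len' le' by blast
  qed
qed

lemma stable_initial:
  assumes "H \<subseteq> k_sets n k" and st: "\<forall>i j. 1\<le>i \<and> i<j \<and> j\<le>n \<longrightarrow> shift i j H = H"
  shows "initial n H"
  unfolding initial_def
proof (intro allI impI, elim conjE)
  fix A B assume A: "A \<subseteq> {1..n}" and B: "B \<in> H" and le: "shift_le A B"
  have Bn: "\<And>B. B \<in> H \<Longrightarrow> B \<subseteq> {1..n}" using assms(1) unfolding k_sets_def by auto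
  have cl: "B-{b}\<union>{c} \<in> H" if "B\<in>H" "1\<le>c" "c<b" "b\<in>B" "c\<notin>B" for B c b
  proof -
    have "b \<le> n" using Bn[OF that(1)] that(4) by auto
    then have "shift c b H = H" using st that by blast
    then show ?thesis using stable that by blast
  qed
  have fA: "finite A" using A finite_subset by blast
  have fB: "finite B" using Bn[OF B] finite_subset by blast
  define as where "as = sorted_list_of_set A"
  define bs where "bs = sorted_list_of_set B"
  have sa: "sorted_wrt (<) as" unfolding as_def by simp
  have pos: "\<forall>t<length as. 1 \<le> as!t"
  proof (intro allI impI)
    fix t assume "t < length as"
    then have "as!t \<in> set as" by simp
    then have "as!t \<in> A" unfolding as_def using fA by simp
    then show "1 \<le> as!t" using A by auto
  qed
  have "set as \<in> H"
    apply (rule init_list[OF cl sa pos, of bs])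
    using B fB le unfolding bs_def as_def shift_le_def by auto
  then show "A \<in> H" unfolding as_def using fA by simp
qed


lemma adj_star:
  assumes "\<not> is_star F" "is_star (shift i j F)" "i \<in> {1..n}" "j \<in> {1..n}" "i \<noteq> j"
  shows "adjF n F i j"
  using star_shift[OF assms(1,2)] assms(3-5) unfolding adjF_def by blast

lemma nonadj_stable:
  assumes ad: "shifted_ad_extremis n F G" and ns: "\<not> is_star F"
    and "1 \<le> c" "c < a" "a \<le> n" "\<not> adjF n F c a"
  shows "shift c a F = F"
proof -
  have "\<not> is_star (shift c a F)" using adj_star[OF ns, of c a n] assms(3-6) by auto
  then show ?thesis using ad assms(3-5) unfolding shifted_ad_extremis_def by blast
qed

lemma P1:
  assumes ad: "shifted_ad_extremis n F G" and ns: "\<not> is_star F"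
    and ca: "c < a" "1 \<le> c" and nadj: "\<not> adjF n F c a" and ab: "adjF n F a b" and bc: "b \<noteq> c"
  shows "adjF n F c b"
proof -
  have an: "a \<le> n" "b \<in> {1..n}" "a \<noteq> b" and cov: "\<forall>A\<in>F. A \<inter> {a,b} \<noteq> {}"
    using ab unfolding adjF_def by auto
  have st: "shift c a F = F" using nonadj_stable[OF ad ns ca(2,1) an(1) nadj] .
  have "A \<inter> {c,b} \<noteq> {}" if A: "A \<in> F" for A
  proof
    assume e: "A \<inter> {c,b} = {}"
    then have "a \<in> A" using cov A by auto
    then have "A - {a} \<union> {c} \<in> F" using stable[OF st A] e by auto
    moreover have "(A - {a} \<union> {c}) \<inter> {a,b} = {}" using e ca bc by auto
    ultimately show False using cov by blast
  qed
  then show ?thesis using an ca bc unfolding adjF_def by auto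
qed

lemma nocenter:
  assumes ad: "shifted_ad_extremis n F G" and ns: "\<not> is_star F" and Fk: "F \<subseteq> k_sets n k"
    and ij: "1 \<le> i" "i < j" "j \<le> n" and sij: "is_star (shift i j F)"
    and cen: "\<forall>a b. adjF n F a b \<longrightarrow> a = x \<or> b = x"
  shows False
proof -
  note ss = star_shift[OF ns sij]
  have cov: "\<forall>A\<in>F. A \<inter> {i,j} \<noteq> {}" and st: "\<forall>A\<in>F. j \<in> A \<longrightarrow> i \<notin> A \<longrightarrow> A - {j} \<union> {i} \<notin> F"
    using ss by auto
  have aij: "adjF n F i j" using adj_star[OF ns sij] ij by auto
  then have xij: "x = i \<or> x = j" using cen by blast
  define y where "y = (if x = i then j else i)"
  have xy: "{x,y} = {i,j}" "x \<noteq> y" unfolding y_def using xij ij by auto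
  have covxy: "\<forall>A\<in>F. A \<inter> {x,y} \<noteq> {}" using cov xy by simp
  have Fsub: "\<And>A. A \<in> F \<Longrightarrow> A \<subseteq> {1..n} \<and> card A = k" using Fk unfolding k_sets_def by auto
  obtain A1 where A1: "A1 \<in> F" "y \<notin> A1" using ns unfolding is_star_def by blast
  have xA1: "x \<in> A1" using covxy A1 by auto
  obtain A3 where A3: "A3 \<in> F" "x \<notin> A3" using ns unfolding is_star_def by blast
  have yA3: "y \<in> A3" using covxy A3 by auto
  define D where "D = {1..n} - {x,y}"
  have cl: "A - {a} \<union> {c} \<in> F" if "A\<in>F" "c\<in>D" "a\<in>D" "c<a" "a\<in>A" "c\<notin>A" for A c a
  proof -
    have "\<not> adjF n F c a" using cen that(2,3) unfolding D_def by auto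
    then have "shift c a F = F" using nonadj_stable[OF ad ns] that(2,3,4) unfolding D_def by auto
    then show ?thesis using stable that by blast
  qed
  have fin: "\<And>A. A \<in> F \<Longrightarrow> finite A" using Fsub finite_subset by blast
  obtain A2 where A2: "A2 \<in> F" "finite A2" "A2 - D = A1 - D" "card (A2 \<inter> D) = card (A1 \<inter> D)"
     "\<forall>c\<in>D. \<forall>a\<in>A2 \<inter> D. c < a \<longrightarrow> c \<in> A2"
    using low_exists[OF cl A1(1) fin[OF A1(1)]] by blast
  obtain A4 where A4: "A4 \<in> F" "finite A4" "A4 - D = A3 - D" "card (A4 \<inter> D) = card (A3 \<inter> D)"
     "\<forall>c\<in>D. \<forall>a\<in>A4 \<inter> D. c < a \<longrightarrow> c \<in> A4"
    using low_exists[OF cl A3(1) fin[OF A3(1)]] by blast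
  have A1D: "A1 - D = {x}" "A1 \<inter> D = A1 - {x}" using Fsub[OF A1(1)] xA1 A1(2) unfolding D_def by auto
  have A3D: "A3 - D = {y}" "A3 \<inter> D = A3 - {y}" using Fsub[OF A3(1)] yA3 A3(2) unfolding D_def by auto
  have "card (A1 \<inter> D) = card (A3 \<inter> D)" unfolding A1D(2) A3D(2)
    using Fsub[OF A1(1)] Fsub[OF A3(1)] xA1 yA3 fin[OF A1(1)] fin[OF A3(1)] by simp
  note ceq = this
  have dc2: "\<forall>c\<in>D. \<forall>a\<in>A2 \<inter> D. c<a \<longrightarrow> c\<in>A2 \<inter> D" using A2(5) by blast
  have dc4: "\<forall>c\<in>D. \<forall>a\<in>A4 \<inter> D. c<a \<longrightarrow> c\<in>A4 \<inter> D" using A4(5) by blast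
  have cc: "card (A2 \<inter> D) = card (A4 \<inter> D)" using A2(4) A4(4) ceq by simp
  have L: "A2 \<inter> D = A4 \<inter> D"
    by (rule downclosed_unique[OF _ _ _ _ dc2 dc4 cc]) (use A2(2) A4(2) in auto)
  have A2e: "A2 = insert x (A2 \<inter> D)" using A2(3) A1D(1) by blast
  have A4e: "A4 = insert y (A2 \<inter> D)" using A4(3) A3D(1) L by blast
  have xL: "x \<notin> A2 \<inter> D" "y \<notin> A2 \<inter> D" unfolding D_def by auto
  show False
  proof (cases "x = i")
    case True
    then have yj: "y = j" unfolding y_def by simp
    have "j \<in> A4" "i \<notin> A4" using A4e xL yj True xy(2) by auto
    then have "A4 - {j} \<union> {i} \<notin> F" using st A4(1) by blast
    moreover have "A4 - {j} \<union> {i} = A2" using A4e A2e xL yj True by auto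
    ultimately show False using A2(1) by simp
  next
    case False
    then have xj: "x = j" "y = i" using xij unfolding y_def by auto
    have "j \<in> A2" "i \<notin> A2" using A2e xL xj xy(2) by auto
    then have "A2 - {j} \<union> {i} \<notin> F" using st A2(1) by blast
    moreover have "A2 - {j} \<union> {i} = A4" using A4e A2e xL xj by auto
    ultimately show False using A4(1) by simp
  qed
qed


lemma interval_lemma:
  fixes V :: "nat set"
  assumes "finite V" "V \<noteq> {}" "\<forall>v\<in>V. 1 \<le> v" "\<And>v c. v \<in> V \<Longrightarrow> 1 \<le> c \<Longrightarrow> c < v \<Longrightarrow> c \<in> V"
  shows "V = {1..card V}"
proof -
  have "V = {1..Max V}"
  proof
    show "V \<subseteq> {1..Max V}" using assms(1,3) by auto
    show "{1..Max V} \<subseteq> V"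
    proof
      fix c assume "c \<in> {1..Max V}"
      moreover have "Max V \<in> V" using assms(1,2) by simp
      ultimately show "c \<in> V" using assms(4)[of "Max V" c] by (cases "c = Max V") auto
    qed
  qed
  then show ?thesis by (metis card_atLeastAtMost diff_Suc_1)
qed

theorem proposition5p4:
  fixes n k l :: nat and F G :: "nat set set"
  assumes "n > k + l"
    and "F \<subseteq> k_sets n k" and "G \<subseteq> k_sets n l"
    and "nontrivial F" and "nontrivial G"
    and "cross_intersecting F G"
    and "saturated_pair n k l F G"
    and "shifted_ad_extremis n F G"
    and "\<not> (initial n F \<and> initial n G)"
    and "triangle_free (cover_edges n F)"
  shows "\<exists>X Y. X \<subseteq> {1..n} \<and> Y \<subseteq> {1..n} \<and> X \<inter> Y = {} \<and>
           X \<union> Y = {1..card X + card Y} \<and>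
           2 \<le> card X \<and> card X \<le> k \<and> 2 \<le> card Y \<and> card Y \<le> k \<and>
           cover_edges n F = {{x, y} | x y. x \<in> X \<and> y \<in> Y}"
proof -
  note ad = assms(8)
  have ns: "\<not> is_star F" using assms(4) unfolding nontrivial_def by blast
  have Fsub: "\<And>A. A \<in> F \<Longrightarrow> A \<subseteq> {1..n} \<and> card A = k" using assms(2) unfolding k_sets_def by auto
  have fin: "\<And>A. A \<in> F \<Longrightarrow> finite A" using Fsub finite_subset by blast
  obtain i j where ij: "1 \<le> i" "i < j" "j \<le> n" "is_star (shift i j F)"
  proof -
    have "\<exists>i j. 1 \<le> i \<and> i < j \<and> j \<le> n \<and> is_star (shift i j F)"
    proof (rule ccontr)
      assume nex: "\<not> (\<exists>i j. 1 \<le> i \<and> i < j \<and> j \<le> n \<and> is_star (shift i j F))"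
      have allst: "\<forall>i j. 1\<le>i \<and> i<j \<and> j\<le>n \<longrightarrow> shift i j F = F \<and> shift i j G = G"
      proof (intro allI impI)
        fix i j assume h: "1\<le>i \<and> i<j \<and> j\<le>n"
        have "(shift i j F = F \<and> shift i j G = G) \<or> is_star (shift i j F)"
          using ad h unfolding shifted_ad_extremis_def by blast
        then show "shift i j F = F \<and> shift i j G = G" using nex h by blast
      qed
      have stF: "\<forall>i j. 1\<le>i \<and> i<j \<and> j\<le>n \<longrightarrow> shift i j F = F" using allst by blast
      have stG: "\<forall>i j. 1\<le>i \<and> i<j \<and> j\<le>n \<longrightarrow> shift i j G = G" using allst by blast
      have "initial n F" using stable_initial[OF assms(2) stF] .
      moreover have "initial n G" using stable_initial[OF assms(3) stG] .
      ultimately show False using assms(9) by blast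
    qed
    then show ?thesis using that by blast
  qed
  define adj where "adj = adjF n F"
  have sym: "\<And>a b. adj a b \<Longrightarrow> adj b a" unfolding adj_def using adjF_sym by blast
  have adjne: "\<And>a b. adj a b \<Longrightarrow> a \<noteq> b" unfolding adj_def adjF_def by auto
  have adjn: "\<And>a b. adj a b \<Longrightarrow> a \<in> {1..n}" unfolding adj_def adjF_def by auto
  have p1: "\<And>c a b. c < a \<Longrightarrow> 1 \<le> c \<Longrightarrow> \<not> adj c a \<Longrightarrow> adj a b \<Longrightarrow> b \<noteq> c \<Longrightarrow> adj c b"
    unfolding adj_def using P1[OF ad ns] by blast
  have tri: "\<And>a b c. adj a b \<Longrightarrow> adj b c \<Longrightarrow> adj a c \<Longrightarrow> False"
  proof -
    fix a b c assume h: "adj a b" "adj b c" "adj a c"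
    then have "{a,b} \<in> cover_edges n F" "{b,c} \<in> cover_edges n F" "{a,c} \<in> cover_edges n F"
      unfolding adj_def by (simp_all add: ce_iff)
    then show False using assms(10) adjne h unfolding triangle_free_def by blast
  qed
  define u where "u = i"
  define w where "w = j"
  have uw: "adj u w" unfolding adj_def u_def w_def using adj_star[OF ns ij(4)] ij by auto
  define V where "V = {v. \<exists>z. adj v z}"
  have Vn: "V \<subseteq> {1..n}" unfolding V_def using adjn by blast
  have K: "\<And>v a b. v \<in> V \<Longrightarrow> adj a b \<Longrightarrow> \<not> adj v a \<Longrightarrow> \<not> adj v b \<Longrightarrow> v \<noteq> a \<Longrightarrow> v \<noteq> b \<Longrightarrow> False"
  proof -
    fix v a b assume h: "v \<in> V" "adj a b" "\<not> adj v a" "\<not> adj v b" "v \<noteq> a" "v \<noteq> b"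
    have v1: "1 \<le> v" using h(1) Vn by auto
    have a1: "1 \<le> a" "1 \<le> b" using adjn[OF h(2)] adjn[OF sym[OF h(2)]] by auto
    show False
    proof (cases "v < a")
      case True then show ?thesis using p1[of v a b] h v1 by blast
    next
      case False note va = this
      show ?thesis
      proof (cases "v < b")
        case True then show ?thesis using p1[of v b a] h v1 sym by blast
      next
        case False
        obtain z where z: "adj v z" using h(1) unfolding V_def by blast
        have av: "a < v" using va h(5) by simp
        have bv: "b < v" using False h(6) by simp
        have za: "z \<noteq> a" using z h(3) by blast
        have zb: "z \<noteq> b" using z h(4) by blast
        have na: "\<not> adj a v" using h(3) sym by blast
        have nb: "\<not> adj b v" using h(4) sym by blast
        have "adj a z" using p1[OF av a1(1) na z za] .
        moreover have "adj b z" using p1[OF bv a1(2) nb z zb] .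
        ultimately show False using tri h(2) sym by blast
      qed
    qed
  qed
  define X where "X = {v\<in>V. \<not> adj v u}"
  define Y where "Y = {v\<in>V. \<not> adj v w}"
  have uX: "u \<in> X" unfolding X_def V_def using uw adjne by blast
  have wY: "w \<in> Y" unfolding Y_def V_def using uw sym adjne by blast
  have disj: "X \<inter> Y = {}"
  proof -
    have False if "v \<in> X" "v \<in> Y" for v
    proof -
      have "v \<noteq> u" using that uw unfolding Y_def by auto
      moreover have "v \<noteq> w" using that uw sym unfolding X_def by auto
      ultimately show False using K[of v u w] that uw unfolding X_def Y_def by blast
    qed
    then show ?thesis by blast
  qed
  have cover: "V = X \<union> Y"
  proof -
    have "v \<in> X \<union> Y" if "v \<in> V" for v
      using that tri[of u w v] uw sym unfolding X_def Y_def by blast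
    then show ?thesis unfolding X_def Y_def by blast
  qed
  have char: "\<And>a b. adj a b \<longleftrightarrow> (a \<in> X \<and> b \<in> Y) \<or> (a \<in> Y \<and> b \<in> X)"
  proof -
    have xy: "adj a b" if "a \<in> X" "b \<in> Y" for a b
    proof (rule ccontr)
      assume na: "\<not> adj a b"
      have bu: "adj b u" using that disj cover unfolding X_def by blast
      have "a \<noteq> b" using that disj by blast
      moreover have "a \<noteq> u" using bu na sym by blast
      moreover have "\<not> adj a u" using that unfolding X_def by blast
      ultimately show False using K[of a b u] that bu na sym cover by blast
    qed
    have same: False if "adj a b" "a \<in> X" "b \<in> X" for a b
    proof -
      have "u \<in> V" using uX unfolding X_def by blast
      moreover have "u \<noteq> a" "u \<noteq> b" using that sym unfolding X_def by blast+
      ultimately show False using K[of u a b] that sym unfolding X_def by blast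
    qed
    have same2: False if "adj a b" "a \<in> Y" "b \<in> Y" for a b
    proof -
      have "w \<in> V" using wY unfolding Y_def by blast
      moreover have "w \<noteq> a" "w \<noteq> b" using that sym unfolding Y_def by blast+
      ultimately show False using K[of w a b] that sym unfolding Y_def by blast
    qed
    fix a b
    show "adj a b \<longleftrightarrow> (a \<in> X \<and> b \<in> Y) \<or> (a \<in> Y \<and> b \<in> X)"
    proof
      assume h: "adj a b"
      then have "a \<in> V" "b \<in> V" unfolding V_def using sym by blast+
      then show "(a \<in> X \<and> b \<in> Y) \<or> (a \<in> Y \<and> b \<in> X)" using h same same2 cover by blast
    qed (use xy sym in blast)
  qed
  have finV: "finite V" using Vn finite_subset by blast
  have finX: "finite X" "finite Y" using finV cover by (metis finite_Un)+
  have Vint: "V = {1..card V}"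
  proof (rule interval_lemma[OF finV])
    show "V \<noteq> {}" using uX cover by blast
    show "\<forall>v\<in>V. 1 \<le> v" using Vn by auto
    fix v c assume h: "v \<in> V" "1 \<le> c" "c < v"
    obtain b where b: "adj v b" using h(1) unfolding V_def by blast
    show "c \<in> V"
    proof (cases "adj c v")
      case True then show ?thesis unfolding V_def by blast
    next
      case False
      have "b \<noteq> c" using b False sym by blast
      then have "adj c b" using p1[OF h(3) h(2) False b] by blast
      then show ?thesis unfolding V_def by blast
    qed
  qed
  have cardV: "card V = card X + card Y" using cover disj finX by (simp add: card_Un_disjoint)
  have cx2: "2 \<le> card X"
  proof (rule ccontr)
    assume "\<not> 2 \<le> card X"
    note lt2 = this
    have "X = {u}"
    proof
      show "X \<subseteq> {u}"
      proof
        fix v0 assume v0: "v0 \<in> X"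
        show "v0 \<in> {u}"
        proof (rule ccontr)
          assume "v0 \<notin> {u}"
          then have "card {u, v0} = 2" by simp
          moreover have "card {u, v0} \<le> card X" by (rule card_mono) (use finX v0 uX in auto)
          ultimately show False using lt2 by simp
        qed
      qed
    qed (use uX in simp)
    then have "\<forall>a b. adjF n F a b \<longrightarrow> a = u \<or> b = u" using char unfolding adj_def by blast
    then show False using nocenter[OF ad ns assms(2) ij] by blast
  qed
  have cy2: "2 \<le> card Y"
  proof (rule ccontr)
    assume "\<not> 2 \<le> card Y"
    note lt2 = this
    have "Y = {w}"
    proof
      show "Y \<subseteq> {w}"
      proof
        fix v0 assume v0: "v0 \<in> Y"
        show "v0 \<in> {w}"
        proof (rule ccontr)
          assume "v0 \<notin> {w}"
          then have "card {w, v0} = 2" by simp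
          moreover have "card {w, v0} \<le> card Y" by (rule card_mono) (use finX v0 wY in auto)
          ultimately show False using lt2 by simp
        qed
      qed
    qed (use wY in simp)
    then have "\<forall>a b. adjF n F a b \<longrightarrow> a = w \<or> b = w" using char unfolding adj_def by blast
    then show False using nocenter[OF ad ns assms(2) ij] by blast
  qed
  have cxk: "card X \<le> k"
  proof -
    obtain A where A: "A \<in> F" "w \<notin> A" using ns unfolding is_star_def by blast
    have "X \<subseteq> A"
    proof
      fix x assume "x \<in> X"
      then have "adj x w" using char wY by blast
      then show "x \<in> A" using A unfolding adj_def adjF_def by blast
    qed
    then show ?thesis using Fsub[OF A(1)] fin[OF A(1)] card_mono by metis
  qed
  have cyk: "card Y \<le> k"
  proof -
    obtain A where A: "A \<in> F" "u \<notin> A" using ns unfolding is_star_def by blast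
    have "Y \<subseteq> A"
    proof
      fix x assume "x \<in> Y"
      then have "adj x u" using char uX by blast
      then show "x \<in> A" using A unfolding adj_def adjF_def by blast
    qed
    then show ?thesis using Fsub[OF A(1)] fin[OF A(1)] card_mono by metis
  qed
  have edges: "cover_edges n F = {{x, y} | x y. x \<in> X \<and> y \<in> Y}"
  proof
    show "cover_edges n F \<subseteq> {{x, y} | x y. x \<in> X \<and> y \<in> Y}"
    proof
      fix e assume "e \<in> cover_edges n F"
      then obtain a b where e: "e = {a,b}" "adj a b" using ce_elim unfolding adj_def by blast
      then show "e \<in> {{x, y} | x y. x \<in> X \<and> y \<in> Y}" using char[of a b] by (auto simp: insert_commute)
    qed
    show "{{x, y} | x y. x \<in> X \<and> y \<in> Y} \<subseteq> cover_edges n F"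
      using char ce_iff unfolding adj_def by blast
  qed
  show ?thesis
    apply (rule exI[of _ X], rule exI[of _ Y])
    using Vn cover disj Vint cardV cx2 cxk cy2 cyk edges by auto
qed

end
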